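(* (1) For every integer $n\ge 2$, $\min\{e(i): 2^{n-1}\le i\le 2^{n}\}=\lfloor n/2\rfloor$. (2) For every integer $n\ge 1$, $\max\{e(i): 2^{n-1}\le i\le 2^{n}\}=n$. (3) For every integer $n\ge 0$, $\min\{i\ge 1: e(i)=n\}=2^{n}$. (4) For every integer $n\ge 0$, $\max\{i\ge 1: e(i)=n\}=\dfrac{4^{n+1}-1}{3}$.
   Context: The Stern polynomials $B_n(t)\in\mathbb{Z}[t]$, $n\ge 0$, are defined by $B_0(t)=0$, $B_1(t)=1$, $B_{2n}(t)=tB_n(t)$ and $B_{2n+1}(t)=B_n(t)+B_{n+1}(t)$ for $n\ge 1$. For $n\ge 1$, $e(n)=\deg_t B_n(t)$. *)

theory Defs
  imports "HOL-Computational_Algebra.Polynomial"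
begin

function stern :: "nat \<Rightarrow> int poly" where
  "stern n = (if n = 0 then 0 else if n = 1 then 1
              else if even n then [:0, 1:] * stern (n div 2)
              else stern (n div 2) + stern (n div 2 + 1))"
  by auto
termination by (relation "measure id") (auto elim!: oddE)

text \<open>e(n) = degree of B_n (used for n \<ge> 1).\<close>
definition e :: "nat \<Rightarrow> nat" where
  "e n = degree (stern n)"

end

theory Submission
  imports Defs
begin

declare stern.simps[simp del]

lemma stern_0[simp]: "stern 0 = 0" by (subst stern.simps) simp
lemma stern_1[simp]: "stern 1 = 1" "stern (Suc 0) = 1" by (subst stern.simps, simp)+
lemma stern_even: "n \<ge> 1 \<Longrightarrow> stern (2*n) = pCons 0 (stern n)"
  by (subst stern.simps) (simp add: mult_pCons_left)
lemma stern_odd: "n \<ge> 1 \<Longrightarrow> stern (2*n+1) = stern n + stern (n+1)"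
  by (subst stern.simps) simp
lemma stern_odd': "n \<ge> 1 \<Longrightarrow> stern (Suc (2*n)) = stern n + stern (Suc n)"
  using stern_odd by simp

lemma stern_pos: "n \<ge> 1 \<Longrightarrow> stern n \<noteq> 0 \<and> (\<forall>i. coeff (stern n) i \<ge> 0)"
proof (induction n rule: nat_less_induct)
  case (1 n)
  show ?case
  proof (cases "n = 1")
    case True then show ?thesis by (simp add: coeff_1)
  next
    case False
    then obtain m where m: "m \<ge> 1" "n = 2*m \<or> n = 2*m+1" using 1(2)
      by (metis One_nat_def add_0 dvd_mult_div_cancel less_one linorder_not_le mult_is_0 not_less_eq_eq oddE)
    from m(2) show ?thesis
    proof
      assume n: "n = 2*m"
      have "stern m \<noteq> 0 \<and> (\<forall>i. coeff (stern m) i \<ge> 0)" using 1(1) m n by simp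
      then show ?thesis using n m by (auto simp: stern_even coeff_pCons split: nat.splits)
    next
      assume n: "n = 2*m+1"
      have A: "stern m \<noteq> 0 \<and> (\<forall>i. coeff (stern m) i \<ge> 0)" using 1(1) m n by simp
      have B: "stern (m+1) \<noteq> 0 \<and> (\<forall>i. coeff (stern (m+1)) i \<ge> 0)" using 1(1) m n by simp
      have "coeff (stern m + stern (m+1)) (degree (stern m)) > 0"
      proof -
        have "coeff (stern m) (degree (stern m)) > 0" using A
          by (metis leading_coeff_0_iff order_le_less)
        then show ?thesis using B by (simp add: add_pos_nonneg)
      qed
      then have "stern m + stern (m+1) \<noteq> 0" by (metis coeff_0 less_irrefl)
      then show ?thesis using n m A B by (simp add: stern_odd' add_nonneg_nonneg)
    qed
  qed
qed

lemma degree_add_nonneg: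
  fixes p q :: "int poly"
  assumes "p \<noteq> 0" "q \<noteq> 0" "\<forall>i. coeff p i \<ge> 0" "\<forall>i. coeff q i \<ge> 0"
  shows "degree (p + q) = max (degree p) (degree q)"
proof -
  have le: "degree (p+q) \<le> max (degree p) (degree q)" by (rule degree_add_le_max)
  have "coeff (p+q) (max (degree p) (degree q)) > 0"
  proof (cases "degree p \<le> degree q")
    case True
    have "coeff q (degree q) > 0" using assms by (metis leading_coeff_0_iff order_le_less)
    then show ?thesis using True assms by (simp add: max_def add_nonneg_pos)
  next
    case False
    have "coeff p (degree p) > 0" using assms by (metis leading_coeff_0_iff order_le_less)
    then show ?thesis using False assms by (simp add: max_def add_pos_nonneg)
  qed
  then have "max (degree p) (degree q) \<le> degree (p+q)" by (metis le_degree less_irrefl)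
  with le show ?thesis by simp
qed

lemma e_1[simp]: "e 1 = 0" "e (Suc 0) = 0" by (simp_all add: e_def)
lemma e_even: "n \<ge> 1 \<Longrightarrow> e (2*n) = e n + 1"
  using stern_pos[of n] by (simp add: e_def stern_even)
lemma e_odd: "n \<ge> 1 \<Longrightarrow> e (2*n+1) = max (e n) (e (n+1))"
  using stern_pos[of n] stern_pos[of "n+1"] by (simp add: e_def stern_odd' degree_add_nonneg)

lemma e_odd': "n \<ge> 1 \<Longrightarrow> e (Suc (2*n)) = max (e n) (e (Suc n))"
  using e_odd by simp

lemma e_2[simp]: "e 2 = 1" "e (Suc (Suc 0)) = 1"
  using e_even[of 1] by (simp_all add: numeral_2_eq_2)

lemma e_pow2: "e (2^k) = k"
  by (induction k) (simp_all add: e_even)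

lemma e_upper: "n \<ge> 1 \<Longrightarrow> 2^(e n) \<le> n"
proof (induction n rule: nat_less_induct)
  case (1 n)
  show ?case
  proof (cases "n = 1")
    case True then show ?thesis by simp
  next
    case False
    then obtain m where m: "m \<ge> 1" "n = 2*m \<or> n = 2*m+1" using 1(2)
      by (metis One_nat_def add_0 dvd_mult_div_cancel less_one linorder_not_le mult_is_0 not_less_eq_eq oddE)
    from m(2) show ?thesis
    proof
      assume n: "n = 2*m"
      have "2^(e m) \<le> m" using 1(1) m n by simp
      then show ?thesis using n m by (simp add: e_even)
    next
      assume n: "n = 2*m+1"
      have "2^(e m) \<le> m" using 1(1) m n by simp
      moreover have "2^(e (m+1)) \<le> m+1" using 1(1) m n by simp
      ultimately show ?thesis using n m by (simp add: e_odd' max_def)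
    qed
  qed
qed

lemma key: "m \<ge> 1 \<Longrightarrow> (e m \<le> e (m+1) + 1 \<and> e (m+1) \<le> e m + 1) \<and> 3*m+1 \<le> 4^(e m+1)
   \<and> 3*m+4 \<le> 4^(e (m+1)+1) \<and> (e m = e (m+1) \<longrightarrow> 3*m+2 \<le> 2*4^(e m))"
proof (induction m rule: nat_less_induct)
  case (1 n)
  show ?case
  proof (cases "n = 1")
    case True then show ?thesis by simp
  next
    case False
    then obtain m where m: "m \<ge> 1" "n = 2*m \<or> n = 2*m+1" using 1(2)
      by (metis One_nat_def add_0 dvd_mult_div_cancel less_one linorder_not_le mult_is_0 not_less_eq_eq oddE)
    have IH: "(e m \<le> e (m+1) + 1 \<and> e (m+1) \<le> e m + 1) \<and> 3*m+1 \<le> 4^(e m+1)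
   \<and> 3*m+4 \<le> 4^(e (m+1)+1) \<and> (e m = e (m+1) \<longrightarrow> 3*m+2 \<le> 2*4^(e m))"
      using 1(1) m by auto
    define a where "a = e m"
    define b where "b = e (m+1)"
    have IH': "(a \<le> b + 1 \<and> b \<le> a + 1) \<and> 3*m+1 \<le> 4^(a+1)
   \<and> 3*m+4 \<le> 4^(b+1) \<and> (a = b \<longrightarrow> 3*m+2 \<le> 2*4^a)"
      using IH unfolding a_def b_def .
    have c: "b = a + 1 \<or> b = a \<or> a = b + 1" using IH unfolding a_def b_def by linarith
    from m(2) show ?thesis
    proof
      assume n: "n = 2*m"
      have E: "e n = a + 1" "e (n+1) = max a b" using n m
        by (simp_all add: a_def b_def e_even e_odd e_odd')
      show ?thesis unfolding E using c IH' n
        by (auto simp: max_def power_Suc)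
    next
      assume n: "n = 2*m+1"
      have E: "e n = max a b" "e (n+1) = b + 1" using n m e_odd'[OF m(1)] e_even[of "m+1"]
        by (simp_all add: a_def b_def)
      have n1: "n + 1 = 2*(m+1)" using n by simp
      show ?thesis unfolding E using c IH' n
        by (auto simp: max_def power_Suc)
    qed
  qed
qed

fun A :: "nat \<Rightarrow> nat" where
  "A 0 = 1" | "A (Suc n) = 4 * A n + 1"

lemma A_eq: "3 * A n + 1 = 4^(n+1)"
  by (induction n) auto

lemma A_ge1: "A n \<ge> 1" by (cases n) auto

lemma A_div: "(4^(n+1) - 1) div 3 = A n"
  using A_eq[of n] by (metis add_diff_cancel_right' nonzero_mult_div_cancel_left zero_neq_numeral)

lemma e_A: "e (A n) = n \<and> e (A n + 1) = n + 1"
proof (induction n)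
  case 0 then show ?case by simp
next
  case (Suc n)
  have h: "A n \<ge> 1" by (rule A_ge1)
  have 1: "A (Suc n) = 2 * (2 * A n) + 1" by simp
  have 2: "A (Suc n) + 1 = 2 * (2 * A n + 1)" by simp
  have "e (2 * A n) = n + 1" using e_even[OF h] Suc by simp
  moreover have "e (2 * A n + 1) = n + 1" using e_odd[OF h] Suc by simp
  moreover have "e (2 * A n + 1 + 1) = n + 2" using e_even[of "A n + 1"] Suc
    by (simp add: algebra_simps)
  moreover have a: "e (2*(2*A n)+1) = max (e (2*A n)) (e (2*A n+1))"
    by (rule e_odd) (use h in simp)
  moreover have b: "e (2*(2*A n+1)) = e (2*A n+1)+1" by (rule e_even) simp
  ultimately have r1: "e (A (Suc n)) = n + 1" and r2: "e (A (Suc n) + 1) = n + 2"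
    by (simp_all only: 1 2) simp_all
  then show ?case by simp
qed

lemma e_lower: "i \<ge> 1 \<Longrightarrow> 3 * i + 1 \<le> 4^(e i + 1)"
  using key by blast

lemma four_pow: "(4::nat)^k = 2^(2*k)"
  by (simp add: power_mult)

theorem theorem4p3:
  shows "(\<forall>n::nat. n \<ge> 2 \<longrightarrow> Min {e i | i. 2^(n-1) \<le> i \<and> i \<le> 2^n} = n div 2)
       \<and> (\<forall>n::nat. n \<ge> 1 \<longrightarrow> Max {e i | i. 2^(n-1) \<le> i \<and> i \<le> 2^n} = n)
       \<and> (\<forall>n::nat. Min {i. i \<ge> 1 \<and> e i = n} = 2^n)
       \<and> (\<forall>n::nat. Max {i. i \<ge> 1 \<and> e i = n} = (4^(n+1) - 1) div 3)"
proof (intro conjI allI impI)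
  have S: "\<And>n. {e i | i. 2^(n-1) \<le> i \<and> i \<le> 2^n} = e ` {2^(n-1)..2^n}" by auto
  have fin: "\<And>n. finite {e i | i. 2^(n-1) \<le> i \<and> i \<le> 2^n}" unfolding S by simp
  {
    fix n :: nat assume n: "n \<ge> 2"
    show "Min {e i | i. 2^(n-1) \<le> i \<and> i \<le> 2^n} = n div 2"
    proof (rule Min_eqI[OF fin])
      fix y assume "y \<in> {e i | i. 2^(n-1) \<le> i \<and> i \<le> 2^n}"
      then obtain i where y: "y = e i" and i: "2^(n-1) \<le> i" "i \<le> 2^n" by auto
      have i1: "i \<ge> 1" using i(1) by (metis one_le_numeral one_le_power order_trans)
      show "n div 2 \<le> y"
      proof (rule ccontr)
        assume "\<not> n div 2 \<le> y"
        moreover have "2 * (n div 2) \<le> n" by simp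
        ultimately have "2 * (e i + 1) \<le> n" using y by presburger
        then have "(4::nat)^(e i + 1) \<le> 2^n" unfolding four_pow by (rule power_increasing) simp
        moreover have "(2::nat)^n = 2 * 2^(n-1)" using n
          by (metis One_nat_def Suc_pred add_leD2 numeral_2_eq_2 one_add_one less_eq_Suc_le not_less_eq_eq power_Suc zero_less_iff_neq_zero)
        ultimately show False using e_lower[OF i1] i(1) by linarith
      qed
    next
      show "n div 2 \<in> {e i | i. 2^(n-1) \<le> i \<and> i \<le> 2^n}"
      proof (cases "even n")
        case True
        then obtain k where k: "n = 2 * Suc k" using n
          by (metis Suc_pred dvd_def le_0_eq mult_0_right not_gr0 numeral_2_eq_2 not_less_eq_eq)
        have h: "e (2 * A k) = Suc k" using e_even[OF A_ge1[of k]] e_A[of k] by simp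
        have eq: "3 * A k + 1 = 4 * 4^k" using A_eq[of k] by simp
        have p1: "(2::nat)^(n-1) = 2 * 4^k" using k by (simp add: four_pow power_mult[symmetric])
        have p2: "(2::nat)^n = 4 * 4^k" using k by (simp add: four_pow power_mult[symmetric])
        have "(1::nat) \<le> 4^k" by simp
        then have "2 ^ (n-1) \<le> 2 * A k \<and> 2 * A k \<le> 2^n" unfolding p1 p2 using eq by linarith
        moreover have "n div 2 = e (2 * A k)" using h k by simp
        ultimately show ?thesis by blast
      next
        case False
        then obtain k where k: "n = 2 * k + 1" using oddE by blast
        have eq: "3 * A k + 1 = 4 * 4^k" using A_eq[of k] by simp
        have p1: "(2::nat)^(n-1) = 4^k" using k by (simp add: four_pow)
        have p2: "(2::nat)^n = 2 * 4^k" using k by (simp add: four_pow)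
        have "(1::nat) \<le> 4^k" by simp
        then have "2 ^ (n-1) \<le> A k \<and> A k \<le> 2^n" unfolding p1 p2 using eq by linarith
        then show ?thesis using e_A[of k] k by force
      qed
    qed
  }
  {
    fix n :: nat assume n: "n \<ge> 1"
    show "Max {e i | i. 2^(n-1) \<le> i \<and> i \<le> 2^n} = n"
    proof (rule Max_eqI[OF fin])
      fix y assume "y \<in> {e i | i. 2^(n-1) \<le> i \<and> i \<le> 2^n}"
      then obtain i where y: "y = e i" and i: "2^(n-1) \<le> i" "i \<le> 2^n" by auto
      have i1: "i \<ge> 1" using i(1) by (metis one_le_numeral one_le_power order_trans)
      have "(2::nat)^(e i) \<le> 2^n" using e_upper[OF i1] i(2) by linarith
      then show "y \<le> n" using y by simp
    next
      have "(2::nat)^(n-1) \<le> 2^n" by (rule power_increasing) auto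
      then show "n \<in> {e i | i. 2^(n-1) \<le> i \<and> i \<le> 2^n}" using e_pow2[of n]
        by (metis (mono_tags, lifting) mem_Collect_eq order_refl)
    qed
  }
  have fin2: "\<And>n. finite {i. i \<ge> 1 \<and> e i = n}"
  proof -
    fix n
    have "{i. i \<ge> 1 \<and> e i = n} \<subseteq> {..A n}"
    proof
      fix i assume "i \<in> {i. i \<ge> 1 \<and> e i = n}"
      then have "3 * i + 1 \<le> 3 * A n + 1" using e_lower[of i] A_eq[of n] by auto
      then show "i \<in> {..A n}" by simp
    qed
    then show "finite {i. i \<ge> 1 \<and> e i = n}" using finite_subset by blast
  qed
  {
    fix n :: nat
    show "Min {i. i \<ge> 1 \<and> e i = n} = 2^n"
    proof (rule Min_eqI[OF fin2])
      fix y assume "y \<in> {i. i \<ge> 1 \<and> e i = n}"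
      then show "2^n \<le> y" using e_upper[of y] by auto
    next
      show "2^n \<in> {i. i \<ge> 1 \<and> e i = n}" using e_pow2[of n] by simp
    qed
  }
  {
    fix n :: nat
    show "Max {i. i \<ge> 1 \<and> e i = n} = (4^(n+1) - 1) div 3"
      unfolding A_div
    proof (rule Max_eqI[OF fin2])
      fix y assume "y \<in> {i. i \<ge> 1 \<and> e i = n}"
      then have "3 * y + 1 \<le> 3 * A n + 1" using e_lower[of y] A_eq[of n] by auto
      then show "y \<le> A n" by simp
    next
      show "A n \<in> {i. i \<ge> 1 \<and> e i = n}" using e_A[of n] A_ge1[of n] by simp
    qed
  }
qed

end
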